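(* Let $S_{r,N}$ be an atomic exponential Puiseux semiring with $r\notin\mathbb{N}$, and let $x\in S_{r,N}$. Then $x$ has a unique factorization $z_{\min}$ of minimum length, and for every $z\in\mathsf{Z}(x)$ there exist factorizations $z=z_1,z_2,\dots,z_k=z_{\min}$ in $\mathsf{Z}(x)$ such that, for each $i\in\{1,\dots,k-1\}$, $z_{i+1}$ is obtained from $z_i$ by replacing $\mathsf{n}(r)^{\delta_m}$ copies of the atom $r^{s_m}$ by $\mathsf{d}(r)^{\delta_m}$ copies of $r^{s_{m+1}}$ or vice versa (for some $m\in\mathbb{N}$), and $|z_i|-|z_{i+1}|=|\mathsf{n}(r)^{\delta_m}-\mathsf{d}(r)^{\delta_m}|$. If moreover $r>1$, then $x$ has a unique factorization $z_{\max}$ of maximum length, and for every $z\in\mathsf{Z}(x)$ there are factorizations $z=z_1,\dots,z_k=z_{\max}$ in $\mathsf{Z}(x)$, each obtained from the previous by such a replacement, with $|z_{i+1}|-|z_i|=|\mathsf{n}(r)^{\delta_m}-\mathsf{d}(r)^{\delta_m}|$ for some $m\in\mathbb{N}$ depending on $i$.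
   Context: $\mathbb{N}=\{0,1,2,\dots\}$. A numerical monoid $N$ is an additive submonoid of $\mathbb{N}$ with finite complement in $\mathbb{N}$. For $r\in\mathbb{Q}_{>0}$ write $r=\mathsf{n}(r)/\mathsf{d}(r)$ with $\mathsf{n}(r),\mathsf{d}(r)$ coprime positive integers. The exponential Puiseux semiring $S_{r,N}$ is the additive submonoid of $\mathbb{Q}_{\ge 0}$ generated by $\{r^k: k\in N\}$. Let $s_0<s_1<\cdots$ be the elements of $N$ in increasing order and $\delta_n=s_{n+1}-s_n$. For $r\notin\mathbb{N}$, $S_{r,N}$ is atomic iff $\mathsf{n}(r)>1$, and then its atoms are exactly $r^{s}$, $s\in N$; note the identity $\mathsf{n}(r)^{\delta_m}r^{s_m}=\mathsf{d}(r)^{\delta_m}r^{s_{m+1}}$. For an atomic monoid, $\mathsf{Z}(x)$ denotes the set of factorizations of $x$ (formal sums of atoms, i.e. elements of the free commutative monoid on the atoms, whose evaluation is $x$) and $|z|$ the length (number of atoms counted with multiplicity) of a factorization $z$. *)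

theory Defs
  imports Complex_Main "HOL-Library.Multiset" "HOL-Library.Infinite_Set"
begin

definition numerical_monoid :: "nat set \<Rightarrow> bool" where
  "numerical_monoid N \<longleftrightarrow> 0 \<in> N \<and> (\<forall>a\<in>N. \<forall>b\<in>N. a + b \<in> N) \<and> finite (UNIV - N)"

definition numr :: "rat \<Rightarrow> nat" where "numr r = nat (fst (quotient_of r))"
definition denr :: "rat \<Rightarrow> nat" where "denr r = nat (snd (quotient_of r))"

definition puiseux :: "rat \<Rightarrow> nat set \<Rightarrow> rat set" where
  "puiseux r N = {sum_mset (image_mset (\<lambda>k. r ^ k) M) | M. set_mset M \<subseteq> N}"

definition atoms :: "rat set \<Rightarrow> rat set" where
  "atoms S = {a \<in> S. a \<noteq> 0 \<and> (\<forall>b\<in>S. \<forall>c\<in>S. a = b + c \<longrightarrow> b = 0 \<or> c = 0)}"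

definition atomic :: "rat set \<Rightarrow> bool" where
  "atomic S \<longleftrightarrow> (\<forall>x\<in>S. x \<noteq> 0 \<longrightarrow> (\<exists>M. set_mset M \<subseteq> atoms S \<and> sum_mset M = x))"

(* factorizations: formal sums (multisets) of atoms evaluating to x; length = size *)
definition factorizations :: "rat set \<Rightarrow> rat \<Rightarrow> rat multiset set" where
  "factorizations S x = {z. set_mset z \<subseteq> atoms S \<and> sum_mset z = x}"

definition sseq :: "nat set \<Rightarrow> nat \<Rightarrow> nat" where
  "sseq N n = Infinite_Set.enumerate N n"

definition delta :: "nat set \<Rightarrow> nat \<Rightarrow> nat" where
  "delta N m = sseq N (Suc m) - sseq N m"

definition replacement :: "rat \<Rightarrow> nat set \<Rightarrow> nat \<Rightarrow> rat multiset \<Rightarrow> rat multiset \<Rightarrow> bool" where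
  "replacement r N m z z' \<longleftrightarrow>
     (let A = replicate_mset (numr r ^ delta N m) (r ^ sseq N m);
          B = replicate_mset (denr r ^ delta N m) (r ^ sseq N (Suc m))
      in (A \<subseteq># z \<and> z' = z - A + B) \<or> (B \<subseteq># z \<and> z' = z - B + A))"

definition step_down :: "rat \<Rightarrow> nat set \<Rightarrow> rat multiset \<Rightarrow> rat multiset \<Rightarrow> bool" where
  "step_down r N z z' \<longleftrightarrow> (\<exists>m. replacement r N m z z' \<and>
     int (size z) - int (size z') = \<bar>int (numr r ^ delta N m) - int (denr r ^ delta N m)\<bar>)"

definition step_up :: "rat \<Rightarrow> nat set \<Rightarrow> rat multiset \<Rightarrow> rat multiset \<Rightarrow> bool" where
  "step_up r N z z' \<longleftrightarrow> (\<exists>m. replacement r N m z z' \<and>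
     int (size z') - int (size z) = \<bar>int (numr r ^ delta N m) - int (denr r ^ delta N m)\<bar>)"

definition chain_in :: "'a set \<Rightarrow> ('a \<Rightarrow> 'a \<Rightarrow> bool) \<Rightarrow> 'a \<Rightarrow> 'a \<Rightarrow> bool" where
  "chain_in F R z w \<longleftrightarrow> (\<exists>zs. zs \<noteq> [] \<and> hd zs = z \<and> last zs = w \<and> set zs \<subseteq> F \<and>
      (\<forall>i. Suc i < length zs \<longrightarrow> R (zs ! i) (zs ! Suc i)))"

end

theory Submission
  imports Defs
begin

definition Dset :: "nat \<Rightarrow> rat set" where
  "Dset b = {q. \<exists>L::nat. \<exists>Q::int. q * of_nat b ^ L = of_int Q}"

lemma Dset_add: assumes "p \<in> Dset b" "q \<in> Dset b" shows "p + q \<in> Dset b"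
proof -
  obtain L1 Q1 where 1: "p * of_nat b ^ L1 = of_int Q1" using assms(1) by (auto simp: Dset_def)
  obtain L2 Q2 where 2: "q * of_nat b ^ L2 = of_int Q2" using assms(2) by (auto simp: Dset_def)
  have "(p+q) * of_nat b ^ (L1+L2) = (p * of_nat b ^ L1) * of_nat b ^ L2 + (q * of_nat b ^ L2) * of_nat b ^ L1"
    by (simp add: power_add algebra_simps)
  also have "\<dots> = of_int (Q1 * int b ^ L2 + Q2 * int b ^ L1)" by (simp add: 1 2)
  finally show ?thesis unfolding Dset_def by blast
qed

lemma Dset_diff: assumes "p \<in> Dset b" "q \<in> Dset b" shows "p - q \<in> Dset b"
proof -
  obtain L1 Q1 where 1: "p * of_nat b ^ L1 = of_int Q1" using assms(1) by (auto simp: Dset_def)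
  obtain L2 Q2 where 2: "q * of_nat b ^ L2 = of_int Q2" using assms(2) by (auto simp: Dset_def)
  have "(p-q) * of_nat b ^ (L1+L2) = (p * of_nat b ^ L1) * of_nat b ^ L2 - (q * of_nat b ^ L2) * of_nat b ^ L1"
    by (simp add: power_add algebra_simps)
  also have "\<dots> = of_int (Q1 * int b ^ L2 - Q2 * int b ^ L1)" by (simp add: 1 2)
  finally show ?thesis unfolding Dset_def by blast
qed

lemma Dset_0: "0 \<in> Dset b" unfolding Dset_def by (rule CollectI, rule exI[of _ 0], rule exI[of _ 0]) simp

lemma Dset_pow: assumes "\<rho> * of_nat b = of_nat a" shows "\<rho> ^ i \<in> Dset b"
proof -
  have "\<rho> ^ i * of_nat b ^ i = of_int (int a ^ i)" by (simp add: assms flip: power_mult_distrib)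
  then show ?thesis unfolding Dset_def by blast
qed

lemma sum_factor:
  assumes "\<rho> * of_nat b = of_nat a" "\<forall>y\<in>#M. \<exists>i. y = c * \<rho> ^ i"
  shows "\<exists>A\<in>Dset b. sum_mset M = c * A"
  using assms(2)
proof (induction M)
  case empty then show ?case using Dset_0 by force
next
  case (add y M)
  then obtain A where A: "A \<in> Dset b" "sum_mset M = c * A" by auto
  obtain i where i: "y = c * \<rho> ^ i" using add.prems by auto
  have "\<rho> ^ i + A \<in> Dset b" by (rule Dset_add[OF Dset_pow[OF assms(1)] A(1)])
  moreover have "sum_mset (add_mset y M) = c * (\<rho> ^ i + A)" using A i by (simp add: algebra_simps)
  ultimately show ?case by blast
qed

lemma chain_in_refl: "z \<in> F \<Longrightarrow> chain_in F R z z"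
  unfolding chain_in_def by (rule exI[of _ "[z]"]) auto

lemma chain_in_cons:
  assumes "z \<in> F" "R z z'" "chain_in F R z' w"
  shows "chain_in F R z w"
proof -
  obtain zs where zs: "zs \<noteq> []" "hd zs = z'" "last zs = w" "set zs \<subseteq> F"
    "\<forall>i. Suc i < length zs \<longrightarrow> R (zs ! i) (zs ! Suc i)"
    using assms(3) unfolding chain_in_def by blast
  have "\<forall>i. Suc i < length (z # zs) \<longrightarrow> R ((z#zs) ! i) ((z#zs) ! Suc i)"
  proof (intro allI impI)
    fix i assume "Suc i < length (z # zs)"
    then show "R ((z#zs) ! i) ((z#zs) ! Suc i)"
      using zs assms(2) by (cases i) (auto simp: hd_conv_nth)
  qed
  then show ?thesis unfolding chain_in_def using zs assms(1)
    by (intro exI[of _ "z # zs"]) auto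
qed

lemma mset_image_ex: "set_mset z \<subseteq> f ` A \<Longrightarrow> \<exists>M. set_mset M \<subseteq> A \<and> z = image_mset f M"
proof (induction z)
  case empty then show ?case by (intro exI[of _ "{#}"]) auto
next
  case (add y z)
  then obtain M where M: "set_mset M \<subseteq> A" "z = image_mset f M" by auto
  obtain a where a: "a \<in> A" "y = f a" using add.prems by auto
  show ?case using M a by (intro exI[of _ "add_mset a M"]) auto
qed

lemma sum_mset_ones: "(\<forall>y\<in>#M. y = (1::rat)) \<Longrightarrow> sum_mset M = of_nat (size M)"
  by (induction M) auto

lemma size_le_sum: "(\<forall>y\<in>#M. y \<ge> (1::rat)) \<Longrightarrow> of_nat (size M) \<le> sum_mset M"
  by (induction M) auto

lemma mset_diff_split: "(z::'a multiset) = (z - w) + (z - (z - w))"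
  by (simp add: subset_mset.add_diff_inverse)

locale PS0 =
  fixes r :: rat and N :: "nat set" and n d :: nat
  assumes NM: "numerical_monoid N" and rpos: "0 < r" and nr: "numr r = n" and dr: "denr r = d"
    and rnd: "r * of_nat d = of_nat n" and cop: "coprime n d" and d2: "2 \<le> d" and n1: "1 \<le> n"
begin

abbreviation E where "E \<equiv> (\<lambda>k. r ^ k) ` N"

lemma infN: "infinite N"
proof
  assume "finite N"
  moreover have "finite (UNIV - N)" using NM by (simp add: numerical_monoid_def)
  ultimately have "finite (N \<union> (UNIV - N))" by simp
  then show False by simp
qed

lemma zeroN: "0 \<in> N" using NM by (simp add: numerical_monoid_def)

lemma s0: "sseq N 0 = 0"
  unfolding sseq_def enumerate_0 using zeroN by (simp add: Least_eq_0)

lemma sN: "sseq N m \<in> N" unfolding sseq_def using infN by (rule enumerate_in_set)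

lemma smono: "sseq N m < sseq N (Suc m)" unfolding sseq_def using infN by (rule enumerate_step)

lemma sSuc: "sseq N (Suc m) = sseq N m + delta N m"
  using smono[of m] unfolding delta_def by simp

lemma dpos: "1 \<le> delta N m" using smono[of m] unfolding delta_def by simp

lemma sEx: "k \<in> N \<Longrightarrow> \<exists>m. sseq N m = k" unfolding sseq_def using infN enumerate_Ex by blast

lemma snext: assumes "k \<in> N" "sseq N m < k" shows "sseq N (Suc m) \<le> k"
proof -
  obtain j where j: "sseq N j = k" using sEx assms(1) by blast
  then have "sseq N m < sseq N j" using assms(2) by simp
  then have "m < j" using enumerate_mono_iff[OF infN] unfolding sseq_def by blast
  then show ?thesis using j enumerate_mono_le_iff[OF infN] unfolding sseq_def by (metis Suc_leI)
qed

lemma sprev: assumes "k \<in> N" "k < sseq N (Suc m)" shows "k \<le> sseq N m"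
proof -
  obtain j where j: "sseq N j = k" using sEx assms(1) by blast
  then have "sseq N j < sseq N (Suc m)" using assms(2) by simp
  then have "j < Suc m" using enumerate_mono_iff[OF infN] unfolding sseq_def by blast
  then show ?thesis using j enumerate_mono_le_iff[OF infN] unfolding sseq_def by (metis less_Suc_eq_le)
qed

lemma n_ne_d: "n \<noteq> d"
  using cop d2 by auto

lemma r_ne1: "r \<noteq> 1"
  using rnd n_ne_d by auto

lemma pow_inj: "r ^ i = r ^ j \<longleftrightarrow> i = j"
proof
  assume h: "r ^ i = r ^ j"
  show "i = j"
  proof (cases "1 < r")
    case True then show ?thesis using h power_inject_exp by blast
  next
    case False
    then have "1 < inverse r" using r_ne1 rpos by (simp add: one_less_inverse)
    moreover have "inverse r ^ i = inverse r ^ j" using h by (simp add: power_inverse)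
    ultimately show ?thesis using power_inject_exp by blast
  qed
qed simp

lemma ident: "of_nat (n ^ delta N m) * r ^ sseq N m = of_nat (d ^ delta N m) * r ^ sseq N (Suc m)"
proof -
  have "of_nat (d ^ delta N m) * r ^ sseq N (Suc m) = (r * of_nat d) ^ delta N m * r ^ sseq N m"
    by (simp add: sSuc power_add power_mult_distrib algebra_simps)
  then show ?thesis by (simp add: rnd)
qed

lemma puis_eq: "puiseux r N = {sum_mset z | z. set_mset z \<subseteq> E}"
proof safe
  fix y assume "y \<in> puiseux r N"
  then obtain M where "set_mset M \<subseteq> N" "y = sum_mset (image_mset (\<lambda>k. r ^ k) M)"
    unfolding puiseux_def by blast
  then show "\<exists>z. y = sum_mset z \<and> set_mset z \<subseteq> E" by (intro exI[of _ "image_mset (\<lambda>k. r ^ k) M"]) auto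
next
  fix z assume "set_mset z \<subseteq> E"
  then obtain M where "set_mset M \<subseteq> N" "z = image_mset (\<lambda>k. r ^ k) M" using mset_image_ex by blast
  then show "sum_mset z \<in> puiseux r N" unfolding puiseux_def by blast
qed

lemma E_pos: "y \<in> E \<Longrightarrow> 0 < y" using rpos by auto

lemma sum_nonneg_E: "set_mset z \<subseteq> E \<Longrightarrow> 0 \<le> sum_mset z"
proof (induction z)
  case (add y z)
  then have "0 < y" using E_pos by auto
  with add show ?case by auto
qed simp

lemma sum_pos: "set_mset z \<subseteq> E \<Longrightarrow> z \<noteq> {#} \<Longrightarrow> 0 < sum_mset z"
proof (induction z)
  case (add y z)
  then have "0 < y" using E_pos by auto
  moreover have "0 \<le> sum_mset z" using add.prems sum_nonneg_E by auto
  ultimately show ?case by simp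
qed simp

lemma atoms_sub: "atoms (puiseux r N) \<subseteq> E"
proof
  fix a assume a: "a \<in> atoms (puiseux r N)"
  then obtain z where z: "set_mset z \<subseteq> E" "a = sum_mset z" unfolding atoms_def puis_eq by blast
  have "z \<noteq> {#}" using a z unfolding atoms_def by auto
  then obtain y where y: "y \<in># z" by blast
  let ?z = "z - {#y#}"
  have zz: "z = add_mset y ?z" using y by simp
  have "set_mset ?z \<subseteq> E" using z(1) by (meson in_diffD subset_iff)
  then have "sum_mset ?z \<in> puiseux r N" unfolding puis_eq by blast
  moreover have "y \<in> puiseux r N" using y z(1) unfolding puis_eq
    by (intro CollectI exI[of _ "{#y#}"]) auto
  moreover have "a = y + sum_mset ?z" using z(2) zz by (metis sum_mset.add_mset)
  moreover have "y \<noteq> 0" using E_pos y z(1) by force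
  ultimately have "sum_mset ?z = 0" using a unfolding atoms_def by blast
  then have "?z = {#}" using sum_pos[OF \<open>set_mset ?z \<subseteq> E\<close>] by (metis less_irrefl)
  then have "a = y" using zz z(2) by simp
  then show "a \<in> E" using y z(1) by blast
qed

end

context PS0 begin

lemma in_S_E: "y \<in> E \<Longrightarrow> y \<in> puiseux r N"
  unfolding puis_eq by (intro CollectI exI[of _ "{#y#}"]) auto

lemma n2_of_atomic: assumes "atomic (puiseux r N)" shows "2 \<le> n"
proof (rule ccontr)
  assume "\<not> 2 \<le> n"
  then have n: "n = 1" using n1 by simp
  have "1 \<in> puiseux r N" using in_S_E[of 1] zeroN by (metis image_eqI power_0)
  then obtain M where M: "set_mset M \<subseteq> atoms (puiseux r N)" "sum_mset M = 1"
    using assms unfolding atomic_def by force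
  then have "M \<noteq> {#}" by auto
  then obtain a where a: "a \<in># M" by blast
  then have aA: "a \<in> atoms (puiseux r N)" using M by auto
  then obtain k where k: "k \<in> N" "a = r ^ k" using atoms_sub by blast
  obtain m where m: "sseq N m = k" using sEx k by blast
  let ?b = "r ^ sseq N (Suc m)"
  let ?e = "d ^ delta N m"
  have "?e \<ge> d ^ 1" using dpos d2 by (intro power_increasing) auto
  then have e2: "?e \<ge> 2" using d2 by simp
  have a_eq: "a = of_nat ?e * ?b" using ident[of m] n k m by simp
  define c where "c = of_nat (?e - 1) * ?b"
  have "a = ?b + c" unfolding c_def a_eq using e2 by (simp add: of_nat_diff algebra_simps)
  moreover have "?b \<in> puiseux r N" using sN by (intro in_S_E) blast
  moreover have "c \<in> puiseux r N" unfolding puis_eq c_def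
    by (intro CollectI exI[of _ "replicate_mset (?e - 1) ?b"]) (auto simp: sN)
  moreover have "?b \<noteq> 0" using rpos by simp
  moreover have "c \<noteq> 0" using e2 rpos by (simp only: c_def mult_eq_0_iff of_nat_eq_0_iff) auto
  ultimately show False using aA unfolding atoms_def by blast
qed

lemma coreA:
  assumes P: "\<forall>y\<in>#P. \<exists>k\<in>N. sseq N m \<le> k \<and> y = r ^ k"
    and Q: "\<forall>y\<in>#Q. \<exists>k\<in>N. sseq N m \<le> k \<and> y = r ^ k"
    and eq: "sum_mset P = sum_mset Q" and cQ: "count Q (r ^ sseq N m) = 0"
    and cP: "0 < count P (r ^ sseq N m)" "count P (r ^ sseq N m) < n ^ delta N m"
  shows False
proof -
  let ?a = "r ^ sseq N m" let ?c = "count P ?a" let ?t = "sseq N (Suc m)" let ?\<delta> = "delta N m"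
  define P1 where "P1 = P - replicate_mset ?c ?a"
  have Psplit: "P = replicate_mset ?c ?a + P1" unfolding P1_def
    using count_le_replicate_mset_subset_eq[of ?c P ?a] by (metis order_refl subset_mset.add_diff_inverse)
  have cP1: "count P1 ?a = 0" unfolding P1_def by simp
  have up: "\<exists>i. y = r ^ ?t * r ^ i" if "y = r ^ k" "k \<in> N" "sseq N m \<le> k" "y \<noteq> ?a" for y k
  proof -
    have "k \<noteq> sseq N m" using that by auto
    then have "?t \<le> k" using snext that by simp
    then have "y = r ^ ?t * r ^ (k - ?t)" using that by (simp flip: power_add)
    then show ?thesis by blast
  qed
  have "\<forall>y\<in>#P1. \<exists>i. y = r ^ ?t * r ^ i"
  proof
    fix y assume y: "y \<in># P1"
    then have "y \<noteq> ?a" using cP1 by (metis count_eq_zero_iff)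
    moreover have "y \<in># P" using y unfolding P1_def by (rule in_diffD)
    ultimately show "\<exists>i. y = r ^ ?t * r ^ i" using P up by blast
  qed
  then obtain A where A: "A \<in> Dset d" "sum_mset P1 = r ^ ?t * A" using sum_factor[OF rnd] by blast
  have "\<forall>y\<in>#Q. \<exists>i. y = r ^ ?t * r ^ i"
  proof
    fix y assume y: "y \<in># Q"
    then have "y \<noteq> ?a" using cQ by (metis count_eq_zero_iff)
    then show "\<exists>i. y = r ^ ?t * r ^ i" using Q up y by blast
  qed
  then obtain B where B: "B \<in> Dset d" "sum_mset Q = r ^ ?t * B" using sum_factor[OF rnd] by blast
  have "sum_mset P = of_nat ?c * ?a + sum_mset P1" using arg_cong[OF Psplit, of sum_mset] by simp
  then have "of_nat ?c * ?a + r ^ ?t * A = r ^ ?t * B" using eq A B by simp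
  moreover have "r ^ ?t = ?a * r ^ ?\<delta>" by (simp add: sSuc power_add)
  ultimately have "?a * (of_nat ?c) = ?a * (r ^ ?\<delta> * (B - A))" by (simp add: algebra_simps)
  then have c_eq: "of_nat ?c = r ^ ?\<delta> * (B - A)" using rpos by simp
  have "B - A \<in> Dset d" using A B Dset_diff by blast
  then obtain L Q0 where L: "(B - A) * of_nat d ^ L = of_int Q0" unfolding Dset_def by blast
  have "of_nat ?c * of_nat d ^ ?\<delta> * of_nat d ^ L = (r * of_nat d) ^ ?\<delta> * ((B - A) * of_nat d ^ L)"
    by (simp add: c_eq power_mult_distrib algebra_simps)
  also have "\<dots> = of_nat n ^ ?\<delta> * of_int Q0" by (simp add: rnd L)
  finally have "rat_of_int (int ?c * int d ^ (?\<delta> + L)) = rat_of_int (int n ^ ?\<delta> * Q0)"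
    by (simp add: power_add algebra_simps)
  then have "int ?c * int d ^ (?\<delta> + L) = int n ^ ?\<delta> * Q0" by (simp only: of_int_eq_iff)
  then have "int (n ^ ?\<delta>) dvd int (?c * d ^ (?\<delta> + L))" by (simp add: dvd_def)
  then have "n ^ ?\<delta> dvd ?c * d ^ (?\<delta> + L)" by (simp only: of_nat_dvd_iff)
  moreover have "coprime (n ^ ?\<delta>) (d ^ (?\<delta> + L))" using cop by simp
  ultimately have "n ^ ?\<delta> dvd ?c" by (simp add: coprime_dvd_mult_left_iff)
  then have "n ^ ?\<delta> \<le> ?c" using cP(1) by (simp add: dvd_imp_le)
  then show False using cP(2) by simp
qed

lemma coreB:
  assumes P: "\<forall>y\<in>#P. \<exists>k\<in>N. k \<le> sseq N (Suc m) \<and> y = r ^ k"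
    and Q: "\<forall>y\<in>#Q. \<exists>k\<in>N. k \<le> sseq N (Suc m) \<and> y = r ^ k"
    and eq: "sum_mset P = sum_mset Q" and cQ: "count Q (r ^ sseq N (Suc m)) = 0"
    and cP: "0 < count P (r ^ sseq N (Suc m))" "count P (r ^ sseq N (Suc m)) < d ^ delta N m"
  shows False
proof -
  let ?a = "r ^ sseq N (Suc m)" let ?c = "count P ?a" let ?t = "sseq N m" let ?\<delta> = "delta N m"
  have rinv: "inverse r * of_nat n = of_nat d" using rpos rnd by (metis mult.commute nonzero_mult_div_cancel_left
       less_irrefl divide_inverse_commute)
  define P1 where "P1 = P - replicate_mset ?c ?a"
  have Psplit: "P = replicate_mset ?c ?a + P1" unfolding P1_def
    using count_le_replicate_mset_subset_eq[of ?c P ?a] by (metis order_refl subset_mset.add_diff_inverse)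
  have cP1: "count P1 ?a = 0" unfolding P1_def by simp
  have down: "\<exists>i. y = r ^ ?t * inverse r ^ i" if "y = r ^ k" "k \<in> N" "k \<le> sseq N (Suc m)" "y \<noteq> ?a" for y k
  proof -
    have "k \<noteq> sseq N (Suc m)" using that by auto
    then have "k \<le> ?t" using sprev that by simp
    then have "r ^ ?t * inverse r ^ (?t - k) = r ^ k * (r ^ (?t - k) * inverse r ^ (?t - k))"
      by (simp add: algebra_simps flip: power_add)
    also have "\<dots> = r ^ k" using rpos by (simp flip: power_mult_distrib)
    finally show ?thesis using that by metis
  qed
  have "\<forall>y\<in>#P1. \<exists>i. y = r ^ ?t * inverse r ^ i"
  proof
    fix y assume y: "y \<in># P1"
    then have "y \<noteq> ?a" using cP1 by (metis count_eq_zero_iff)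
    moreover have "y \<in># P" using y unfolding P1_def by (rule in_diffD)
    ultimately show "\<exists>i. y = r ^ ?t * inverse r ^ i" using P down by blast
  qed
  then obtain A where A: "A \<in> Dset n" "sum_mset P1 = r ^ ?t * A" using sum_factor[OF rinv] by blast
  have "\<forall>y\<in>#Q. \<exists>i. y = r ^ ?t * inverse r ^ i"
  proof
    fix y assume y: "y \<in># Q"
    then have "y \<noteq> ?a" using cQ by (metis count_eq_zero_iff)
    then show "\<exists>i. y = r ^ ?t * inverse r ^ i" using Q down y by blast
  qed
  then obtain B where B: "B \<in> Dset n" "sum_mset Q = r ^ ?t * B" using sum_factor[OF rinv] by blast
  have "sum_mset P = of_nat ?c * ?a + sum_mset P1" using arg_cong[OF Psplit, of sum_mset] by simp
  then have "of_nat ?c * ?a + r ^ ?t * A = r ^ ?t * B" using eq A B by simp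
  moreover have "?a = r ^ ?t * r ^ ?\<delta>" by (simp add: sSuc power_add)
  ultimately have "r ^ ?t * (of_nat ?c * r ^ ?\<delta>) = r ^ ?t * (B - A)" by (simp add: algebra_simps)
  then have c_eq: "of_nat ?c * r ^ ?\<delta> = B - A" using rpos by simp
  have "B - A \<in> Dset n" using A B Dset_diff by blast
  then obtain L Q0 where L: "(B - A) * of_nat n ^ L = of_int Q0" unfolding Dset_def by blast
  have "of_nat ?c * of_nat n ^ ?\<delta> * of_nat n ^ L = (of_nat ?c * r ^ ?\<delta>) * of_nat n ^ L * of_nat d ^ ?\<delta>"
    by (simp add: power_mult_distrib algebra_simps flip: rnd)
  also have "\<dots> = of_int Q0 * of_nat d ^ ?\<delta>" by (simp add: c_eq L)
  finally have "rat_of_int (int ?c * int n ^ (?\<delta> + L)) = rat_of_int (int d ^ ?\<delta> * Q0)"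
    by (simp add: power_add algebra_simps)
  then have "int ?c * int n ^ (?\<delta> + L) = int d ^ ?\<delta> * Q0" by (simp only: of_int_eq_iff)
  then have "int (d ^ ?\<delta>) dvd int (?c * n ^ (?\<delta> + L))" by (simp add: dvd_def)
  then have "d ^ ?\<delta> dvd ?c * n ^ (?\<delta> + L)" by (simp only: of_nat_dvd_iff)
  moreover have "coprime (d ^ ?\<delta>) (n ^ (?\<delta> + L))" using cop by (simp add: coprime_commute)
  ultimately have "d ^ ?\<delta> dvd ?c" by (simp add: coprime_dvd_mult_left_iff)
  then have "d ^ ?\<delta> \<le> ?c" using cP(1) by (simp add: dvd_imp_le)
  then show False using cP(2) by simp
qed

end

context PS0 begin

lemma diff_setup:
  fixes z w :: "rat multiset"
  assumes "sum_mset z = sum_mset w" "z \<noteq> w"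
  shows "sum_mset (z - w) = sum_mset (w - z)" "z - w + (w - z) \<noteq> {#}"
    "\<And>y. count (z - w) y = 0 \<or> count (w - z) y = 0"
proof -
  have "z - (z - w) = w - (w - z)"
    by (metis inter_mset_def subset_mset.inf_commute)
  then have "sum_mset z = sum_mset (z - w) + sum_mset (w - (w - z))"
    using mset_diff_split[of z w] by (metis sum_mset.union)
  moreover have "sum_mset w = sum_mset (w - z) + sum_mset (w - (w - z))"
    using mset_diff_split[of w z] by (metis sum_mset.union)
  ultimately show "sum_mset (z - w) = sum_mset (w - z)" using assms(1) by simp
  show "z - w + (w - z) \<noteq> {#}"
  proof
    assume "z - w + (w - z) = {#}"
    then have "z \<subseteq># w" "w \<subseteq># z" by (simp_all add: Diff_eq_empty_iff_mset)
    then show False using assms(2) by simp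
  qed
  fix y show "count (z - w) y = 0 \<or> count (w - z) y = 0" by (simp add: nat_le_linear)
qed

lemma elemE: "y \<in> E \<Longrightarrow> \<exists>k\<in>N. y = r ^ k" by blast

lemma uniqA:
  assumes z: "set_mset z \<subseteq> E" and w: "set_mset w \<subseteq> E"
    and bz: "\<forall>m. count z (r ^ sseq N m) < n ^ delta N m"
    and bw: "\<forall>m. count w (r ^ sseq N m) < n ^ delta N m"
    and eq: "sum_mset z = sum_mset w"
  shows "z = w"
proof (rule ccontr)
  assume ne: "z \<noteq> w"
  define z' w' where "z' = z - w" and "w' = w - z"
  have s: "sum_mset z' = sum_mset w'" and nemp: "z' + w' \<noteq> {#}" and cc: "\<And>y. count z' y = 0 \<or> count w' y = 0"
    using diff_setup[OF eq ne] unfolding z'_def w'_def by auto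
  have z'E: "set_mset z' \<subseteq> E" using z unfolding z'_def by (meson in_diffD subset_iff)
  have w'E: "set_mset w' \<subseteq> E" using w unfolding w'_def by (meson in_diffD subset_iff)
  define K where "K = {k \<in> N. r ^ k \<in># z' + w'}"
  obtain y where y: "y \<in># z' + w'" using nemp by (metis multiset_nonemptyE)
  then obtain k where k: "k \<in> N" "y = r ^ k" using z'E w'E by auto
  then have "k \<in> K" unfolding K_def using y by simp
  define j0 where "j0 = Least (\<lambda>k. k \<in> K)"
  have j0K: "j0 \<in> K" unfolding j0_def using \<open>k \<in> K\<close> by (rule LeastI)
  have j0le: "\<And>k. k \<in> K \<Longrightarrow> j0 \<le> k" unfolding j0_def by (rule Least_le)
  obtain m where m: "sseq N m = j0" using sEx j0K unfolding K_def by blast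
  have elz: "\<forall>y\<in>#z'. \<exists>k\<in>N. sseq N m \<le> k \<and> y = r ^ k"
  proof
    fix y assume "y \<in># z'"
    moreover then obtain k where "k \<in> N" "y = r ^ k" using z'E by auto
    ultimately show "\<exists>k\<in>N. sseq N m \<le> k \<and> y = r ^ k" using j0le m unfolding K_def by auto
  qed
  have elw: "\<forall>y\<in>#w'. \<exists>k\<in>N. sseq N m \<le> k \<and> y = r ^ k"
  proof
    fix y assume "y \<in># w'"
    moreover then obtain k where "k \<in> N" "y = r ^ k" using w'E by auto
    ultimately show "\<exists>k\<in>N. sseq N m \<le> k \<and> y = r ^ k" using j0le m unfolding K_def by auto
  qed
  have "r ^ sseq N m \<in># z' + w'" using j0K m unfolding K_def by simp
  then consider "0 < count z' (r ^ sseq N m)" | "0 < count w' (r ^ sseq N m)" by auto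
  then show False
  proof cases
    case 1
    then have "count w' (r ^ sseq N m) = 0" using cc by (metis less_irrefl)
    moreover have "count z' (r ^ sseq N m) < n ^ delta N m" using bz[rule_format, of m] unfolding z'_def by simp
    ultimately show False using coreA[OF elz elw s] 1 by blast
  next
    case 2
    then have "count z' (r ^ sseq N m) = 0" using cc by (metis less_irrefl)
    moreover have "count w' (r ^ sseq N m) < n ^ delta N m" using bw[rule_format, of m] unfolding w'_def by simp
    ultimately show False using coreA[OF elw elz s[symmetric]] 2 by blast
  qed
qed

lemma uniqB:
  assumes z: "set_mset z \<subseteq> E" and w: "set_mset w \<subseteq> E"
    and bz: "\<forall>m. count z (r ^ sseq N (Suc m)) < d ^ delta N m"
    and bw: "\<forall>m. count w (r ^ sseq N (Suc m)) < d ^ delta N m"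
    and eq: "sum_mset z = sum_mset w"
  shows "z = w"
proof (rule ccontr)
  assume ne: "z \<noteq> w"
  define z' w' where "z' = z - w" and "w' = w - z"
  have s: "sum_mset z' = sum_mset w'" and nemp: "z' + w' \<noteq> {#}" and cc: "\<And>y. count z' y = 0 \<or> count w' y = 0"
    using diff_setup[OF eq ne] unfolding z'_def w'_def by auto
  have z'E: "set_mset z' \<subseteq> E" using z unfolding z'_def by (meson in_diffD subset_iff)
  have w'E: "set_mset w' \<subseteq> E" using w unfolding w'_def by (meson in_diffD subset_iff)
  define K where "K = {k \<in> N. r ^ k \<in># z' + w'}"
  have "inj (\<lambda>k. r ^ k)" using pow_inj by (auto intro: injI)
  then have "finite ((\<lambda>k. r ^ k) -` set_mset (z' + w'))" by (intro finite_vimageI) auto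
  moreover have "K \<subseteq> (\<lambda>k. r ^ k) -` set_mset (z' + w')" unfolding K_def by auto
  ultimately have finK: "finite K" by (rule finite_subset[rotated])
  obtain y where y: "y \<in># z' + w'" using nemp by (metis multiset_nonemptyE)
  then obtain k where k: "k \<in> N" "y = r ^ k" using z'E w'E by auto
  then have "k \<in> K" unfolding K_def using y by simp
  then have Kne: "K \<noteq> {}" by blast
  define j1 where "j1 = Max K"
  have j1K: "j1 \<in> K" unfolding j1_def using finK Kne by simp
  have j1le: "\<And>k. k \<in> K \<Longrightarrow> k \<le> j1" unfolding j1_def using finK by simp
  obtain j where j: "sseq N j = j1" using sEx j1K unfolding K_def by blast
  have elz: "\<forall>y\<in>#z'. \<exists>k\<in>N. k \<le> j1 \<and> y = r ^ k"
  proof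
    fix y assume "y \<in># z'"
    moreover then obtain k where "k \<in> N" "y = r ^ k" using z'E by auto
    ultimately show "\<exists>k\<in>N. k \<le> j1 \<and> y = r ^ k" using j1le unfolding K_def by auto
  qed
  have elw: "\<forall>y\<in>#w'. \<exists>k\<in>N. k \<le> j1 \<and> y = r ^ k"
  proof
    fix y assume "y \<in># w'"
    moreover then obtain k where "k \<in> N" "y = r ^ k" using w'E by auto
    ultimately show "\<exists>k\<in>N. k \<le> j1 \<and> y = r ^ k" using j1le unfolding K_def by auto
  qed
  have a_in: "r ^ j1 \<in># z' + w'" using j1K unfolding K_def by simp
  show False
  proof (cases j)
    case 0
    then have j10: "j1 = 0" using j s0 by simp
    have one_z: "\<forall>y\<in>#z'. y = 1" using elz j10 by auto
    have one_w: "\<forall>y\<in>#w'. y = 1" using elw j10 by auto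
    have "1 \<in># z' + w'" using a_in j10 by simp
    then consider "1 \<in># z'" "count w' 1 = 0" | "1 \<in># w'" "count z' 1 = 0" using cc
      by (metis count_eq_zero_iff union_iff)
    then show False
    proof cases
      case 1
      then have "w' = {#}" using one_w by (metis count_eq_zero_iff multiset_nonemptyE)
      then have "sum_mset z' = 0" using s by simp
      moreover have "z' \<noteq> {#}" using 1 by auto
      ultimately show False using sum_mset_ones[OF one_z] by simp
    next
      case 2
      then have "z' = {#}" using one_z by (metis count_eq_zero_iff multiset_nonemptyE)
      then have "sum_mset w' = 0" using s by simp
      moreover have "w' \<noteq> {#}" using 2 by auto
      ultimately show False using sum_mset_ones[OF one_w] by simp
    qed
  next
    case (Suc m)
    then have jm: "sseq N (Suc m) = j1" using j by simp
    have elz': "\<forall>y\<in>#z'. \<exists>k\<in>N. k \<le> sseq N (Suc m) \<and> y = r ^ k" using elz jm by simp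
    have elw': "\<forall>y\<in>#w'. \<exists>k\<in>N. k \<le> sseq N (Suc m) \<and> y = r ^ k" using elw jm by simp
    from a_in jm consider "0 < count z' (r ^ sseq N (Suc m))" | "0 < count w' (r ^ sseq N (Suc m))" by auto
    then show False
    proof cases
      case 1
      then have "count w' (r ^ sseq N (Suc m)) = 0" using cc by (metis less_irrefl)
      moreover have "count z' (r ^ sseq N (Suc m)) < d ^ delta N m" using bz[rule_format, of m] unfolding z'_def by simp
      ultimately show False using coreB[OF elz' elw' s] 1 by blast
    next
      case 2
      then have "count z' (r ^ sseq N (Suc m)) = 0" using cc by (metis less_irrefl)
      moreover have "count w' (r ^ sseq N (Suc m)) < d ^ delta N m" using bw[rule_format, of m] unfolding w'_def by simp
      ultimately show False using coreB[OF elw' elz' s[symmetric]] 2 by blast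
    qed
  qed
qed

end

locale PS = PS0 + assumes n2: "2 \<le> n"
begin

definition Am where "Am m = replicate_mset (n ^ delta N m) (r ^ sseq N m)"
definition Bm where "Bm m = replicate_mset (d ^ delta N m) (r ^ sseq N (Suc m))"
definition redA where "redA z \<longleftrightarrow> (\<forall>m. count z (r ^ sseq N m) < n ^ delta N m)"
definition redB where "redB z \<longleftrightarrow> (\<forall>m. count z (r ^ sseq N (Suc m)) < d ^ delta N m)"
definition redD where "redD z \<longleftrightarrow> (if d < n then redA z else redB z)"

lemma sumAB: "sum_mset (Am m) = sum_mset (Bm m)"
  unfolding Am_def Bm_def using ident[of m] by simp

lemma npow2: "2 \<le> n ^ delta N m"
proof -
  have "n ^ 1 \<le> n ^ delta N m" using dpos n2 by (intro power_increasing) auto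
  then show ?thesis using n2 by simp
qed

lemma dpow2: "2 \<le> d ^ delta N m"
proof -
  have "d ^ 1 \<le> d ^ delta N m" using dpos d2 by (intro power_increasing) auto
  then show ?thesis using d2 by simp
qed

lemma pow_less: "a < b \<Longrightarrow> a ^ delta N m < (b::nat) ^ delta N m"
  using dpos[of m] by (intro power_strict_mono) simp_all

lemma swap_sum: assumes "X \<subseteq># z" "sum_mset X = sum_mset Y" shows "sum_mset (z - X + Y) = sum_mset (z::rat multiset)"
proof -
  have "z = X + (z - X)" using assms(1) by (rule subset_mset.add_diff_inverse[symmetric])
  then have "sum_mset z = sum_mset X + sum_mset (z - X)" by (metis sum_mset.union)
  then show ?thesis using assms(2) by simp
qed

lemma swap_size: assumes "X \<subseteq># z" shows "size (z - X + Y) = size z - size X + size Y"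
proof -
  have "size (z - X + Y) = size (z - X) + size Y" by (rule size_union)
  then show ?thesis using size_Diff_submset[OF assms] by simp
qed

lemma swap_E: assumes "set_mset z \<subseteq> E" "set_mset Y \<subseteq> E" shows "set_mset (z - X + Y) \<subseteq> E"
proof
  fix y assume "y \<in># z - X + Y"
  then have "y \<in># z - X \<or> y \<in># Y" by simp
  then have "y \<in># z \<or> y \<in># Y" by (metis in_diffD)
  then show "y \<in> E" using assms by blast
qed

lemma Am_E: "set_mset (Am m) \<subseteq> E" unfolding Am_def using sN by auto
lemma Bm_E: "set_mset (Bm m) \<subseteq> E" unfolding Bm_def using sN by auto

lemma replAB: "Am m \<subseteq># z \<Longrightarrow> replacement r N m z (z - Am m + Bm m)"
  unfolding replacement_def Let_def nr dr Am_def Bm_def by simp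
lemma replBA: "Bm m \<subseteq># z \<Longrightarrow> replacement r N m z (z - Bm m + Am m)"
  unfolding replacement_def Let_def nr dr Am_def Bm_def by simp

lemma down_step:
  assumes z: "set_mset z \<subseteq> E" and nred: "\<not> redD z"
  shows "\<exists>z'. step_down r N z z' \<and> set_mset z' \<subseteq> E \<and> sum_mset z' = sum_mset z \<and> size z' < size z \<and> 2 \<le> size z'"
proof (cases "d < n")
  case True
  then obtain m where m: "n ^ delta N m \<le> count z (r ^ sseq N m)" using nred unfolding redD_def redA_def
    by (auto simp: not_less)
  then have sub: "Am m \<subseteq># z" unfolding Am_def by (simp add: count_le_replicate_mset_subset_eq)
  let ?z' = "z - Am m + Bm m"
  have lt: "d ^ delta N m < n ^ delta N m" using pow_less True by blast
  have sz: "size ?z' = size z - n ^ delta N m + d ^ delta N m" using swap_size[OF sub] by (simp add: Am_def Bm_def)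
  have le: "n ^ delta N m \<le> size z" using size_mset_mono[OF sub] by (simp add: Am_def)
  have absd: "\<bar>int n ^ delta N m - int d ^ delta N m\<bar> = int n ^ delta N m - int d ^ delta N m"
    using lt by (metis abs_of_nonneg diff_ge_0_iff_ge less_imp_le of_nat_le_iff of_nat_power)
  have "int (size z) - int (size ?z') = int n ^ delta N m - int d ^ delta N m" using sz le lt by simp
  then have "step_down r N z ?z'" unfolding step_down_def nr dr
    using replAB[OF sub] absd by (intro exI[of _ m]) simp
  moreover have "size ?z' \<ge> 2" using sz dpow2[of m] le by simp
  ultimately show ?thesis using swap_sum[OF sub sumAB] swap_E[OF z Bm_E] sz le lt
    by (intro exI[of _ ?z']) auto
next
  case False
  then have dn: "n < d" using n_ne_d by simp
  then obtain m where m: "d ^ delta N m \<le> count z (r ^ sseq N (Suc m))" using nred False unfolding redD_def redB_def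
    by (auto simp: not_less)
  then have sub: "Bm m \<subseteq># z" unfolding Bm_def by (simp add: count_le_replicate_mset_subset_eq)
  let ?z' = "z - Bm m + Am m"
  have lt: "n ^ delta N m < d ^ delta N m" using pow_less dn by blast
  have sz: "size ?z' = size z - d ^ delta N m + n ^ delta N m" using swap_size[OF sub] by (simp add: Am_def Bm_def)
  have le: "d ^ delta N m \<le> size z" using size_mset_mono[OF sub] by (simp add: Bm_def)
  have absd: "\<bar>int n ^ delta N m - int d ^ delta N m\<bar> = int d ^ delta N m - int n ^ delta N m"
    using lt by (metis abs_minus_commute abs_of_nonneg diff_ge_0_iff_ge less_imp_le of_nat_le_iff of_nat_power)
  have "int (size z) - int (size ?z') = int d ^ delta N m - int n ^ delta N m" using sz le lt by simp
  then have "step_down r N z ?z'" unfolding step_down_def nr dr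
    using replBA[OF sub] absd by (intro exI[of _ m]) simp
  moreover have "size ?z' \<ge> 2" using sz npow2[of m] le by simp
  ultimately show ?thesis using swap_sum[OF sub sumAB[symmetric]] swap_E[OF z Am_E] sz le lt
    by (intro exI[of _ ?z']) auto
qed

lemma down_exists:
  "set_mset z \<subseteq> E \<Longrightarrow> \<exists>w. redD w \<and> set_mset w \<subseteq> E \<and> sum_mset w = sum_mset z \<and>
     chain_in {u. set_mset u \<subseteq> E \<and> sum_mset u = sum_mset z} (step_down r N) z w \<and>
     size w \<le> size z \<and> (size w = size z \<longrightarrow> w = z) \<and> (w = z \<or> 2 \<le> size w)"
proof (induction "size z" arbitrary: z rule: less_induct)
  case less
  show ?case
  proof (cases "redD z")
    case True
    then show ?thesis using less.prems by (intro exI[of _ z]) (auto intro: chain_in_refl)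
  next
    case False
    obtain z' where z': "step_down r N z z'" "set_mset z' \<subseteq> E" "sum_mset z' = sum_mset z"
      "size z' < size z" "2 \<le> size z'" using down_step[OF less.prems False] by blast
    obtain w where w: "redD w" "set_mset w \<subseteq> E" "sum_mset w = sum_mset z'"
      "chain_in {u. set_mset u \<subseteq> E \<and> sum_mset u = sum_mset z'} (step_down r N) z' w"
      "size w \<le> size z'" "w = z' \<or> 2 \<le> size w"
      using less.hyps[OF z'(4) z'(2)] by blast
    have F: "{u. set_mset u \<subseteq> E \<and> sum_mset u = sum_mset z'} = {u. set_mset u \<subseteq> E \<and> sum_mset u = sum_mset z}"
      using z'(3) by simp
    have zF: "z \<in> {u. set_mset u \<subseteq> E \<and> sum_mset u = sum_mset z}" using less.prems by simp
    have "chain_in {u. set_mset u \<subseteq> E \<and> sum_mset u = sum_mset z} (step_down r N) z w"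
      by (rule chain_in_cons[OF zF z'(1) w(4)[unfolded F]])
    moreover have "size w < size z" using w(5) z'(4) by simp
    moreover have "2 \<le> size w" using w(6) z'(5) by (cases "w = z'") simp_all
    ultimately show ?thesis using w(1,2,3) z'(3) by (intro exI[of _ w]) simp
  qed
qed

lemma r_gt1: "d < n \<Longrightarrow> 1 < r"
proof -
  assume "d < n"
  then have "r * of_nat d > 1 * of_nat d" using rnd by simp
  then show ?thesis by (metis mult_less_cancel_right of_nat_0_le_iff not_less)
qed

lemma up_step:
  assumes dn: "d < n" and z: "set_mset z \<subseteq> E" and nred: "\<not> redB z"
  shows "\<exists>z'. step_up r N z z' \<and> set_mset z' \<subseteq> E \<and> sum_mset z' = sum_mset z \<and> size z < size z'"
proof -
  obtain m where m: "d ^ delta N m \<le> count z (r ^ sseq N (Suc m))" using nred unfolding redB_def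
    by (auto simp: not_less)
  then have sub: "Bm m \<subseteq># z" unfolding Bm_def by (simp add: count_le_replicate_mset_subset_eq)
  let ?z' = "z - Bm m + Am m"
  have lt: "d ^ delta N m < n ^ delta N m" using pow_less dn by blast
  have sz: "size ?z' = size z - d ^ delta N m + n ^ delta N m" using swap_size[OF sub] by (simp add: Am_def Bm_def)
  have le: "d ^ delta N m \<le> size z" using size_mset_mono[OF sub] by (simp add: Bm_def)
  have absd: "\<bar>int n ^ delta N m - int d ^ delta N m\<bar> = int n ^ delta N m - int d ^ delta N m"
    using lt by (metis abs_of_nonneg diff_ge_0_iff_ge less_imp_le of_nat_le_iff of_nat_power)
  have "int (size ?z') - int (size z) = int n ^ delta N m - int d ^ delta N m" using sz le lt by simp
  then have "step_up r N z ?z'" unfolding step_up_def nr dr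
    using replBA[OF sub] absd by (intro exI[of _ m]) simp
  then show ?thesis using swap_sum[OF sub sumAB[symmetric]] swap_E[OF z Am_E] sz le lt
    by (intro exI[of _ ?z']) auto
qed

lemma size_le_floor:
  assumes dn: "d < n" and z: "set_mset z \<subseteq> E" shows "size z \<le> nat \<lfloor>sum_mset z\<rfloor>"
proof -
  have "\<forall>y\<in>#z. 1 \<le> y" using z r_gt1[OF dn] by (auto intro: one_le_power)
  then have "of_nat (size z) \<le> sum_mset z" by (rule size_le_sum)
  then show ?thesis by (metis floor_of_nat floor_mono nat_int nat_mono)
qed

lemma up_exists:
  assumes dn: "d < n"
  shows "set_mset z \<subseteq> E \<Longrightarrow> \<exists>w. redB w \<and> set_mset w \<subseteq> E \<and> sum_mset w = sum_mset z \<and>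
     chain_in {u. set_mset u \<subseteq> E \<and> sum_mset u = sum_mset z} (step_up r N) z w \<and>
     size z \<le> size w \<and> (size w = size z \<longrightarrow> w = z)"
proof (induction "nat \<lfloor>sum_mset z\<rfloor> - size z" arbitrary: z rule: less_induct)
  case less
  show ?case
  proof (cases "redB z")
    case True
    then show ?thesis using less.prems by (intro exI[of _ z]) (auto intro: chain_in_refl)
  next
    case False
    then obtain z' where z': "step_up r N z z'" "set_mset z' \<subseteq> E" "sum_mset z' = sum_mset z"
      "size z < size z'" using up_step[OF dn] less.prems by blast
    have "size z' \<le> nat \<lfloor>sum_mset z\<rfloor>" using size_le_floor[OF dn z'(2)] z'(3) by simp
    then have dec: "nat \<lfloor>sum_mset z'\<rfloor> - size z' < nat \<lfloor>sum_mset z\<rfloor> - size z" using z'(3,4) by simp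
    obtain w where w: "redB w" "set_mset w \<subseteq> E" "sum_mset w = sum_mset z'"
      "chain_in {u. set_mset u \<subseteq> E \<and> sum_mset u = sum_mset z'} (step_up r N) z' w"
      "size z' \<le> size w"
      using less.hyps[OF dec z'(2)] by blast
    have "chain_in {u. set_mset u \<subseteq> E \<and> sum_mset u = sum_mset z} (step_up r N) z w"
      using chain_in_cons[of z _ "step_up r N" z' w] w(4) z' less.prems by auto
    then show ?thesis using w z' by (intro exI[of _ w]) auto
  qed
qed

lemma uniqD:
  assumes a: "set_mset z \<subseteq> E" "set_mset w \<subseteq> E" "redD z" "redD w" "sum_mset z = sum_mset w"
  shows "z = w"
proof (cases "d < n")
  case True
  then have "redA z" "redA w" using a(3,4) unfolding redD_def by simp_all
  then have h1: "\<forall>m. count z (r ^ sseq N m) < n ^ delta N m" and h2: "\<forall>m. count w (r ^ sseq N m) < n ^ delta N m"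
    unfolding redA_def by simp_all
  show ?thesis by (rule uniqA[OF a(1,2) h1 h2 a(5)])
next
  case False
  then have "redB z" "redB w" using a(3,4) unfolding redD_def by simp_all
  then have h1: "\<forall>m. count z (r ^ sseq N (Suc m)) < d ^ delta N m" and h2: "\<forall>m. count w (r ^ sseq N (Suc m)) < d ^ delta N m"
    unfolding redB_def by simp_all
  show ?thesis by (rule uniqB[OF a(1,2) h1 h2 a(5)])
qed

lemma atoms_eq: "atoms (puiseux r N) = E"
proof
  show "atoms (puiseux r N) \<subseteq> E" by (rule atoms_sub)
  show "E \<subseteq> atoms (puiseux r N)"
  proof
    fix y assume yE: "y \<in> E"
    have yS: "y \<in> puiseux r N" using in_S_E[OF yE] .
    have y0: "y \<noteq> 0" using E_pos[OF yE] by simp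
    have "b = 0 \<or> c = 0" if bc: "b \<in> puiseux r N" "c \<in> puiseux r N" "y = b + c" for b c
    proof (rule ccontr)
      assume "\<not> (b = 0 \<or> c = 0)"
      then have b0: "b \<noteq> 0" and c0: "c \<noteq> 0" by auto
      obtain zb where zb: "set_mset zb \<subseteq> E" "b = sum_mset zb" using bc(1) unfolding puis_eq by blast
      obtain zc where zc: "set_mset zc \<subseteq> E" "c = sum_mset zc" using bc(2) unfolding puis_eq by blast
      have "zb \<noteq> {#}" "zc \<noteq> {#}" using b0 c0 zb zc by auto
      then have "size zb \<ge> 1" "size zc \<ge> 1" by (auto simp: Suc_le_eq nonempty_has_size)
      then have sz: "2 \<le> size (zb + zc)" by simp
      have M: "set_mset (zb + zc) \<subseteq> E" "sum_mset (zb + zc) = y" using zb zc bc(3) by auto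
      obtain w where w: "redD w" "set_mset w \<subseteq> E" "sum_mset w = y" "w = zb + zc \<or> 2 \<le> size w"
        using down_exists[OF M(1)] M(2) by blast
      have c1: "count {#y#} a \<le> 1" for a by simp
      have "redD {#y#}" unfolding redD_def redA_def redB_def
        using le_less_trans[OF c1 less_le_trans[OF _ npow2]] le_less_trans[OF c1 less_le_trans[OF _ dpow2]]
        by simp
      then have "w = {#y#}" using uniqD[OF w(2) _ w(1)] yE w(3) by simp
      then have "size w = 1" by simp
      moreover have "2 \<le> size w" using w(4) sz by (cases "w = zb + zc") simp_all
      ultimately show False by simp
    qed
    then show "y \<in> atoms (puiseux r N)" unfolding atoms_def using yS y0 by blast
  qed
qed

end

theorem mainTheorem2:
  fixes r :: rat and N :: "nat set" and x :: rat
  assumes "numerical_monoid N"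
    and "r > 0"
    and "r \<notin> \<nat>"
    and "atomic (puiseux r N)"
    and "x \<in> puiseux r N"
  shows "(\<exists>zmin \<in> factorizations (puiseux r N) x.
            (\<forall>z \<in> factorizations (puiseux r N) x. size zmin \<le> size z \<and> (size z = size zmin \<longrightarrow> z = zmin)) \<and>
            (\<forall>z \<in> factorizations (puiseux r N) x.
               chain_in (factorizations (puiseux r N) x) (step_down r N) z zmin))
       \<and> (r > 1 \<longrightarrow>
          (\<exists>zmax \<in> factorizations (puiseux r N) x.
            (\<forall>z \<in> factorizations (puiseux r N) x. size z \<le> size zmax \<and> (size z = size zmax \<longrightarrow> z = zmax)) \<and>
            (\<forall>z \<in> factorizations (puiseux r N) x.
               chain_in (factorizations (puiseux r N) x) (step_up r N) z zmax)))"
proof -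
  obtain p q where pq: "quotient_of r = (p, q)" by (cases "quotient_of r")
  have q0: "q > 0" using quotient_of_denom_pos[OF pq] .
  have cpq: "coprime p q" using quotient_of_coprime[OF pq] .
  have rpq: "r = of_int p / of_int q" using quotient_of_div[OF pq] .
  have rq: "r * of_int q = of_int p" using rpq q0 by simp
  have p0: "p > 0"
  proof -
    have "0 < r * of_int q" using assms(2) q0 by simp
    then show ?thesis using rq by simp
  qed
  define n d where "n = nat p" and "d = nat q"
  have nr: "numr r = n" unfolding numr_def n_def pq by simp
  have dr: "denr r = d" unfolding denr_def d_def pq by simp
  have rnd: "r * of_nat d = of_nat n" unfolding n_def d_def using rq p0 q0 by simp
  have cop: "coprime n d" unfolding n_def d_def using cpq p0 q0
    by (metis coprime_int_iff int_nat_eq less_imp_le)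
  have "q \<noteq> 1"
  proof
    assume "q = 1"
    then have "r = of_nat n" using rpq p0 unfolding n_def by simp
    then show False using assms(3) by simp
  qed
  then have d2: "2 \<le> d" unfolding d_def using q0 by simp
  have n1: "1 \<le> n" unfolding n_def using p0 by simp
  interpret P0: PS0 r N n d using assms(1,2) nr dr rnd cop d2 n1 by unfold_locales
  have n2: "2 \<le> n" using P0.n2_of_atomic[OF assms(4)] .
  interpret P: PS r N n d using n2 by unfold_locales
  let ?E = "(\<lambda>k. r ^ k) ` N"
  have F: "factorizations (puiseux r N) x = {u. set_mset u \<subseteq> ?E \<and> sum_mset u = x}"
    unfolding factorizations_def P.atoms_eq ..
  obtain z0 where z0: "set_mset z0 \<subseteq> ?E" "sum_mset z0 = x" using assms(5) unfolding P0.puis_eq by blast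
  have part1: "\<exists>zmin \<in> factorizations (puiseux r N) x.
            (\<forall>z \<in> factorizations (puiseux r N) x. size zmin \<le> size z \<and> (size z = size zmin \<longrightarrow> z = zmin)) \<and>
            (\<forall>z \<in> factorizations (puiseux r N) x.
               chain_in (factorizations (puiseux r N) x) (step_down r N) z zmin)"
  proof -
    obtain zm where zm: "P.redD zm" "set_mset zm \<subseteq> ?E" "sum_mset zm = x"
      using P.down_exists[OF z0(1)] z0(2) by blast
    have main: "size zm \<le> size z \<and> (size z = size zm \<longrightarrow> z = zm) \<and>
        chain_in (factorizations (puiseux r N) x) (step_down r N) z zm"
      if z: "z \<in> factorizations (puiseux r N) x" for z
    proof -
      have zE: "set_mset z \<subseteq> ?E" "sum_mset z = x" using z F by auto
      obtain w where w: "P.redD w" "set_mset w \<subseteq> ?E" "sum_mset w = sum_mset z"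
        "chain_in {u. set_mset u \<subseteq> ?E \<and> sum_mset u = sum_mset z} (step_down r N) z w"
        "size w \<le> size z" "size w = size z \<longrightarrow> w = z"
        using P.down_exists[OF zE(1)] by blast
      have "w = zm" using P.uniqD[OF w(2) zm(2) w(1) zm(1)] w(3) zE(2) zm(3) by simp
      then show ?thesis using w zE(2) F by auto
    qed
    show ?thesis using zm main F by (intro bexI[of _ zm]) auto
  qed
  have part2: "\<exists>zmax \<in> factorizations (puiseux r N) x.
            (\<forall>z \<in> factorizations (puiseux r N) x. size z \<le> size zmax \<and> (size z = size zmax \<longrightarrow> z = zmax)) \<and>
            (\<forall>z \<in> factorizations (puiseux r N) x.
               chain_in (factorizations (puiseux r N) x) (step_up r N) z zmax)" if r1: "r > 1"
  proof -
    have "of_nat d < r * of_nat d" using r1 d2 by simp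
    then have dn: "d < n" using rnd by simp
    obtain zm where zm: "P.redB zm" "set_mset zm \<subseteq> ?E" "sum_mset zm = x"
      using P.up_exists[OF dn z0(1)] z0(2) by blast
    have main: "size z \<le> size zm \<and> (size z = size zm \<longrightarrow> z = zm) \<and>
        chain_in (factorizations (puiseux r N) x) (step_up r N) z zm"
      if z: "z \<in> factorizations (puiseux r N) x" for z
    proof -
      have zE: "set_mset z \<subseteq> ?E" "sum_mset z = x" using z F by auto
      obtain w where w: "P.redB w" "set_mset w \<subseteq> ?E" "sum_mset w = sum_mset z"
        "chain_in {u. set_mset u \<subseteq> ?E \<and> sum_mset u = sum_mset z} (step_up r N) z w"
        "size z \<le> size w" "size w = size z \<longrightarrow> w = z"
        using P.up_exists[OF dn zE(1)] by blast
      have "w = zm" using P0.uniqB[OF w(2) zm(2)] w(1,3) zm(1,3) zE(2) unfolding P.redB_def by simp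
      then show ?thesis using w zE(2) F by auto
    qed
    show ?thesis using zm main F by (intro bexI[of _ zm]) auto
  qed
  show ?thesis using part1 part2 by blast
qed

end
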